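(* Let $X$ be a quasi-geodesic metric space and let $G\curvearrowright X$ be a cobounded quasi-action. Suppose that for $i=1,2$, $\rho_i:G\to\hat G_i$ are two topological completions of $G\curvearrowright X$. Then there exist compact normal subgroups $K_i\vartriangleleft\hat G_i$ ($i=1,2$) and an isomorphism of topological groups $\lambda:\hat G_1/K_1\to\hat G_2/K_2$ such that $\lambda\circ\pi_1\circ\rho_1=\pi_2\circ\rho_2$, where $\pi_i:\hat G_i\to\hat G_i/K_i$ are the quotient maps.
   Context: A metric space $X$ is quasi-geodesic if there are $K\ge1,A\ge0$ such that any two points can be joined by a chain $x_0,\dots,x_n$ with consecutive distances at most $A$ and $n\le Kd(x_0,x_n)+A$. A $(K,A)$-quasi-action of $G$ on $X$ assigns to each $g\in G$ a $(K,A)$-quasi-isometry $x\mapsto g\cdot x$ of $X$ with $d(h\cdot(g\cdot x),hg\cdot x)\le A$ and $d(e\cdot x,x)\le A$ for all $g,h,x$; it is cobounded if for some $r$, every $x,y$ admit $g$ with $d(g\cdot x,y)\le r$. A subset $T\subseteq G$ is bounded if $\{t\cdot x_0:t\in T\}$ is bounded for some (equivalently every) $x_0$. A topological completion is a homomorphism $\rho:G\to\hat G$ to a Hausdorff locally compact group with dense image such that for every $T\subseteq G$, $T$ is bounded iff $\overline{\rho(T)}$ is compact. *)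

theory Defs
  imports "HOL-Analysis.Analysis" "HOL-Algebra.Coset"
begin

definition quasi_isometry_on :: "'x::metric_space set \<Rightarrow> real \<Rightarrow> real \<Rightarrow> ('x \<Rightarrow> 'x) \<Rightarrow> bool" where
  "quasi_isometry_on X K A f \<longleftrightarrow>
     f ` X \<subseteq> X \<and>
     (\<forall>x\<in>X. \<forall>y\<in>X. dist x y / K - A \<le> dist (f x) (f y) \<and> dist (f x) (f y) \<le> K * dist x y + A) \<and>
     (\<forall>y\<in>X. \<exists>x\<in>X. dist (f x) y \<le> A)"

definition quasi_geodesic :: "'x::metric_space set \<Rightarrow> bool" where
  "quasi_geodesic X \<longleftrightarrow>
     (\<exists>K A. K \<ge> 1 \<and> A \<ge> 0 \<and>
        (\<forall>x\<in>X. \<forall>y\<in>X. \<exists>(n::nat) (c::nat \<Rightarrow> 'x).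
            c 0 = x \<and> c n = y \<and> (\<forall>i\<le>n. c i \<in> X) \<and>
            (\<forall>i<n. dist (c i) (c (Suc i)) \<le> A) \<and>
            real n \<le> K * dist x y + A))"

definition quasi_action_KA ::
  "('g, 'b) monoid_scheme \<Rightarrow> 'x::metric_space set \<Rightarrow> real \<Rightarrow> real \<Rightarrow> ('g \<Rightarrow> 'x \<Rightarrow> 'x) \<Rightarrow> bool" where
  "quasi_action_KA G X K A act \<longleftrightarrow>
     (\<forall>g\<in>carrier G. quasi_isometry_on X K A (act g)) \<and>
     (\<forall>g\<in>carrier G. \<forall>h\<in>carrier G. \<forall>x\<in>X. dist (act h (act g x)) (act (h \<otimes>\<^bsub>G\<^esub> g) x) \<le> A) \<and>
     (\<forall>x\<in>X. dist (act \<one>\<^bsub>G\<^esub> x) x \<le> A)"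

definition quasi_action ::
  "('g, 'b) monoid_scheme \<Rightarrow> 'x::metric_space set \<Rightarrow> ('g \<Rightarrow> 'x \<Rightarrow> 'x) \<Rightarrow> bool" where
  "quasi_action G X act \<longleftrightarrow> (\<exists>K A. K \<ge> 1 \<and> A \<ge> 0 \<and> quasi_action_KA G X K A act)"

definition cobounded_action ::
  "('g, 'b) monoid_scheme \<Rightarrow> 'x::metric_space set \<Rightarrow> ('g \<Rightarrow> 'x \<Rightarrow> 'x) \<Rightarrow> bool" where
  "cobounded_action G X act \<longleftrightarrow>
     (\<exists>r. \<forall>x\<in>X. \<forall>y\<in>X. \<exists>g\<in>carrier G. dist (act g x) y \<le> r)"

definition bounded_subset ::
  "('g, 'b) monoid_scheme \<Rightarrow> 'x::metric_space set \<Rightarrow> ('g \<Rightarrow> 'x \<Rightarrow> 'x) \<Rightarrow> 'g set \<Rightarrow> bool" where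
  "bounded_subset G X act T \<longleftrightarrow> (\<exists>x0\<in>X. bounded ((\<lambda>t. act t x0) ` T))"

definition topological_group :: "('h, 'c) monoid_scheme \<Rightarrow> 'h topology \<Rightarrow> bool" where
  "topological_group H T \<longleftrightarrow>
     group H \<and> topspace T = carrier H \<and>
     continuous_map (prod_topology T T) T (\<lambda>(x, y). x \<otimes>\<^bsub>H\<^esub> y) \<and>
     continuous_map T T (\<lambda>x. inv\<^bsub>H\<^esub> x)"

text \<open>Quotient topology on the coset space G/K (carrier of H Mod K), induced by x \<mapsto> K #> x.\<close>
definition quotient_group_topology :: "('h, 'c) monoid_scheme \<Rightarrow> 'h topology \<Rightarrow> 'h set \<Rightarrow> 'h set topology" where
  "quotient_group_topology H T K =
     topology (\<lambda>U. U \<subseteq> carrier (H Mod K) \<and> openin T (\<Union>U))"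

definition topological_completion ::
  "('g, 'b) monoid_scheme \<Rightarrow> 'x::metric_space set \<Rightarrow> ('g \<Rightarrow> 'x \<Rightarrow> 'x) \<Rightarrow>
   ('h, 'c) monoid_scheme \<Rightarrow> 'h topology \<Rightarrow> ('g \<Rightarrow> 'h) \<Rightarrow> bool" where
  "topological_completion G X act H T \<rho> \<longleftrightarrow>
     \<rho> \<in> hom G H \<and> topological_group H T \<and> Hausdorff_space T \<and> locally_compact_space T \<and>
     T closure_of (\<rho> ` carrier G) = topspace T \<and>
     (\<forall>S. S \<subseteq> carrier G \<longrightarrow>
        (bounded_subset G X act S \<longleftrightarrow> compactin T (T closure_of (\<rho> ` S))))"

end

theory Submission
  imports Defs
begin


lemma qtop_istop:
  assumes "group H" "subgroup K H"
  shows "istopology (\<lambda>U. U \<subseteq> carrier (H Mod K) \<and> openin T (\<Union>U))"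
proof -
  have disj: "pairwise disjnt (rcosets\<^bsub>H\<^esub> K)" using group.rcos_disjoint[OF assms(1,2)] .
  have I: "S \<inter> U \<subseteq> carrier (H Mod K) \<and> openin T (\<Union> (S \<inter> U))"
    if S: "S \<subseteq> carrier (H Mod K) \<and> openin T (\<Union> S)" and U: "U \<subseteq> carrier (H Mod K) \<and> openin T (\<Union> U)" for S U
  proof -
    have "\<Union>(S \<inter> U) = \<Union>S \<inter> \<Union>U"
    proof
      show "\<Union> S \<inter> \<Union> U \<subseteq> \<Union> (S \<inter> U)"
      proof
        fix x assume "x \<in> \<Union> S \<inter> \<Union> U"
        then obtain A B where AB: "A \<in> S" "B \<in> U" "x \<in> A" "x \<in> B" by blast
        then have "A \<in> rcosets\<^bsub>H\<^esub> K" "B \<in> rcosets\<^bsub>H\<^esub> K" using S U by (auto simp: FactGroup_def)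
        then have "A = B" using disj AB unfolding pairwise_def disjnt_def by blast
        then show "x \<in> \<Union> (S \<inter> U)" using AB by blast
      qed
    qed blast
    then show ?thesis using S U by auto
  qed
  have J: "\<Union> KK \<subseteq> carrier (H Mod K) \<and> openin T (\<Union> (\<Union> KK))"
    if "\<forall>V\<in>KK. V \<subseteq> carrier (H Mod K) \<and> openin T (\<Union> V)" for KK
  proof -
    have a: "\<Union> KK \<subseteq> carrier (H Mod K)" and b: "\<forall>S\<in>Union ` KK. openin T S" using that by blast+
    have "\<Union> (\<Union> KK) = \<Union> (Union ` KK)" by blast
    then show ?thesis using a openin_Union[of "Union ` KK" T] b by simp
  qed
  show ?thesis unfolding istopology_def using I J by blast
qed

lemma qtop_open:
  assumes "group H" "subgroup K H" "topspace T = carrier H"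
  shows "openin (quotient_group_topology H T K) = (\<lambda>U. U \<subseteq> carrier (H Mod K) \<and> openin T (\<Union>U))"
  unfolding quotient_group_topology_def using qtop_istop[OF assms(1,2), of T] by simp

lemma qtop_space:
  assumes "group H" "subgroup K H" "topspace T = carrier H"
  shows "topspace (quotient_group_topology H T K) = carrier (H Mod K)"
proof -
  note o = qtop_open[OF assms]
  have "openin (quotient_group_topology H T K) (carrier (H Mod K))"
    unfolding o using group.rcosets_part_G[OF assms(1,2)] assms(3) openin_topspace[of T] by (simp add: FactGroup_def)
  then have "carrier (H Mod K) \<subseteq> topspace (quotient_group_topology H T K)" by (rule openin_subset)
  moreover have "topspace (quotient_group_topology H T K) \<subseteq> carrier (H Mod K)"
    using openin_topspace[of "quotient_group_topology H T K"] unfolding o by blast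
  ultimately show ?thesis by blast
qed




lemma tg_mult_nbhd:
  assumes "topological_group H T" "a \<in> carrier H" "b \<in> carrier H" "openin T U" "a \<otimes>\<^bsub>H\<^esub> b \<in> U"
  shows "\<exists>U1 U2. openin T U1 \<and> openin T U2 \<and> a \<in> U1 \<and> b \<in> U2 \<and> (\<forall>c\<in>U1. \<forall>d\<in>U2. c \<otimes>\<^bsub>H\<^esub> d \<in> U)"
proof -
  have c: "continuous_map (prod_topology T T) T (\<lambda>(x, y). x \<otimes>\<^bsub>H\<^esub> y)" and ts: "topspace T = carrier H"
    using assms(1) unfolding topological_group_def by auto
  define P where "P = {z \<in> topspace (prod_topology T T). (\<lambda>(x, y). x \<otimes>\<^bsub>H\<^esub> y) z \<in> U}"
  have op: "openin (prod_topology T T) P"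
    unfolding P_def by (rule openin_continuous_map_preimage[OF c assms(4)])
  have ab: "(a,b) \<in> P"
    unfolding P_def using assms(2,3,5) ts by simp
  have H: "\<forall>x y. (x,y) \<in> P \<longrightarrow> (\<exists>U V. openin T U \<and> openin T V \<and> x \<in> U \<and> y \<in> V \<and> U \<times> V \<subseteq> P)"
    using op unfolding openin_prod_topology_alt .
  obtain U1 U2 where UU: "openin T U1" "openin T U2" "a \<in> U1" "b \<in> U2" "U1 \<times> U2 \<subseteq> P"
    using H[rule_format, OF ab] by blast
  have "\<forall>c\<in>U1. \<forall>d\<in>U2. c \<otimes>\<^bsub>H\<^esub> d \<in> U"
  proof (intro ballI)
    fix c d assume "c \<in> U1" "d \<in> U2"
    then have "(c,d) \<in> U1 \<times> U2" by (rule SigmaI)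
    then have "(c,d) \<in> P" using UU(5) by (rule subsetD[rotated])
    then show "c \<otimes>\<^bsub>H\<^esub> d \<in> U" unfolding P_def by simp
  qed
  then show ?thesis using UU(1-4) by (intro exI conjI)
qed

lemma tg_inv_nbhd:
  assumes "topological_group H T" "a \<in> carrier H" "openin T U" "inv\<^bsub>H\<^esub> a \<in> U"
  shows "\<exists>U1. openin T U1 \<and> a \<in> U1 \<and> (\<forall>c\<in>U1. inv\<^bsub>H\<^esub> c \<in> U)"
proof -
  have c: "continuous_map T T (\<lambda>x. inv\<^bsub>H\<^esub> x)" and ts: "topspace T = carrier H"
    using assms(1) unfolding topological_group_def by auto
  have o: "openin T {z \<in> topspace T. inv\<^bsub>H\<^esub> z \<in> U}"
    by (rule openin_continuous_map_preimage[OF c assms(3)])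
  have "a \<in> {z \<in> topspace T. inv\<^bsub>H\<^esub> z \<in> U}" using assms(2,4) ts by simp
  moreover have "\<forall>c\<in>{z \<in> topspace T. inv\<^bsub>H\<^esub> z \<in> U}. inv\<^bsub>H\<^esub> c \<in> U" by simp
  ultimately show ?thesis using o by (intro exI[of _ "{z \<in> topspace T. inv\<^bsub>H\<^esub> z \<in> U}"] conjI)
qed




locale twocomp =
  fixes G :: "'g monoid" and H1 :: "'a monoid" and T1 :: "'a topology" and r1 :: "'g \<Rightarrow> 'a"
    and H2 :: "'b monoid" and T2 :: "'b topology" and r2 :: "'g \<Rightarrow> 'b"
  assumes grpG: "group G"
    and hom1: "r1 \<in> hom G H1" and tg1: "topological_group H1 T1" and haus1: "Hausdorff_space T1"
    and lc1: "locally_compact_space T1" and dense1: "T1 closure_of (r1 ` carrier G) = topspace T1"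
    and hom2: "r2 \<in> hom G H2" and tg2: "topological_group H2 T2" and haus2: "Hausdorff_space T2"
    and lc2: "locally_compact_space T2" and dense2: "T2 closure_of (r2 ` carrier G) = topspace T2"
    and rc: "\<And>S. S \<subseteq> carrier G \<Longrightarrow>
       compactin T1 (T1 closure_of (r1 ` S)) \<longleftrightarrow> compactin T2 (T2 closure_of (r2 ` S))"
begin

lemma grp1: "group H1" and ts1: "topspace T1 = carrier H1"
  and grp2: "group H2" and ts2: "topspace T2 = carrier H2"
  using tg1 tg2 unfolding topological_group_def by auto

sublocale H1: group H1 by (rule grp1)
sublocale H2: group H2 by (rule grp2)
sublocale GG: group G by (rule grpG)

lemma gh1: "group_hom G H1 r1" using grpG grp1 hom1 by (simp add: group_hom_def group_hom_axioms_def)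
lemma gh2: "group_hom G H2 r2" using grpG grp2 hom2 by (simp add: group_hom_def group_hom_axioms_def)

lemma r1c: "g \<in> carrier G \<Longrightarrow> r1 g \<in> carrier H1" using hom1 by (auto simp: hom_def)
lemma r2c: "g \<in> carrier G \<Longrightarrow> r2 g \<in> carrier H2" using hom2 by (auto simp: hom_def)

definition Rel where
  "Rel x y \<longleftrightarrow> x \<in> carrier H1 \<and> y \<in> carrier H2 \<and>
     (\<forall>U V. openin T1 U \<longrightarrow> openin T2 V \<longrightarrow> x \<in> U \<longrightarrow> y \<in> V \<longrightarrow> (\<exists>g\<in>carrier G. r1 g \<in> U \<and> r2 g \<in> V))"

lemma RelD:
  assumes "Rel x y" "openin T1 U" "openin T2 V" "x \<in> U" "y \<in> V"
  shows "\<exists>g\<in>carrier G. r1 g \<in> U \<and> r2 g \<in> V"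
  using assms unfolding Rel_def by simp

lemma Rel_carr: assumes "Rel x y" shows "x \<in> carrier H1" "y \<in> carrier H2"
  using assms unfolding Rel_def by simp_all

lemma Rel_notE:
  assumes "x \<in> carrier H1" "y \<in> carrier H2" "\<not> Rel x y"
  shows "\<exists>U V. openin T1 U \<and> openin T2 V \<and> x \<in> U \<and> y \<in> V \<and> (\<forall>g\<in>carrier G. \<not> (r1 g \<in> U \<and> r2 g \<in> V))"
  using assms unfolding Rel_def by blast

lemma Rel_r:
  assumes g: "g \<in> carrier G" shows "Rel (r1 g) (r2 g)"
  unfolding Rel_def
proof (intro conjI allI impI)
  show "r1 g \<in> carrier H1" using r1c[OF g] .
  show "r2 g \<in> carrier H2" using r2c[OF g] .
  fix U V assume "openin T1 U" "openin T2 V" "r1 g \<in> U" "r2 g \<in> V"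
  then show "\<exists>g'\<in>carrier G. r1 g' \<in> U \<and> r2 g' \<in> V" using g by blast
qed

lemma Rel_nbhd:
  assumes "x \<in> carrier H1"
  shows "\<exists>N C. openin T1 N \<and> x \<in> N \<and> compactin T2 C \<and> (\<forall>x'\<in>N. \<forall>y. Rel x' y \<longrightarrow> y \<in> C)"
proof -
  have "\<exists>U K. openin T1 U \<and> compactin T1 K \<and> x \<in> U \<and> U \<subseteq> K"
    using lc1 assms ts1 unfolding locally_compact_space_def by simp
  then obtain N Kc where N: "openin T1 N" "compactin T1 Kc" "x \<in> N" "N \<subseteq> Kc"
    by blast
  define S where "S = {g \<in> carrier G. r1 g \<in> N}"
  have "T1 closure_of (r1 ` S) \<subseteq> T1 closure_of Kc" by (rule closure_of_mono) (use N in \<open>auto simp: S_def\<close>)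
  also have "\<dots> = Kc" using compactin_imp_closedin[OF haus1 N(2)] by (simp add: closure_of_eq)
  finally have sub: "T1 closure_of (r1 ` S) \<subseteq> Kc" .
  have "compactin T1 (T1 closure_of (r1 ` S))" by (rule closed_compactin[OF N(2) sub closedin_closure_of])
  moreover have "S \<subseteq> carrier G" by (auto simp: S_def)
  ultimately have C: "compactin T2 (T2 closure_of (r2 ` S))" using rc[of S] by simp
  have "\<forall>x'\<in>N. \<forall>y. Rel x' y \<longrightarrow> y \<in> T2 closure_of (r2 ` S)"
  proof (intro ballI allI impI)
    fix x' y assume x': "x' \<in> N" "Rel x' y"
    show "y \<in> T2 closure_of (r2 ` S)"
      unfolding in_closure_of
    proof (intro conjI allI impI)
      show "y \<in> topspace T2" using Rel_carr[OF x'(2)] ts2 by simp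
      fix V assume V: "y \<in> V \<and> openin T2 V"
      obtain g where "g \<in> carrier G" "r1 g \<in> N" "r2 g \<in> V"
        using RelD[OF x'(2) N(1)] V x'(1) by blast
      then show "\<exists>z. z \<in> r2 ` S \<and> z \<in> V" by (auto simp: S_def)
    qed
  qed
  then show ?thesis using N C by blast
qed

lemma Rel_usc:
  assumes "x \<in> carrier H1" "openin T2 Op" "\<forall>y. Rel x y \<longrightarrow> y \<in> Op"
  shows "\<exists>W. openin T1 W \<and> x \<in> W \<and> (\<forall>x'\<in>W. \<forall>y. Rel x' y \<longrightarrow> y \<in> Op)"
proof -
  obtain N C where N: "openin T1 N" "x \<in> N" "compactin T2 C" "\<forall>x'\<in>N. \<forall>y. Rel x' y \<longrightarrow> y \<in> C"
    using Rel_nbhd[OF assms(1)] by blast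
  have "closedin T2 (C - Op)" by (rule closedin_diff[OF compactin_imp_closedin[OF haus2 N(3)] assms(2)])
  then have CO: "compactin T2 (C - Op)" by (rule closed_compactin[OF N(3), rotated]) blast
  have "\<forall>z\<in>C - Op. \<exists>W V. openin T1 W \<and> openin T2 V \<and> x \<in> W \<and> z \<in> V \<and> (\<forall>g\<in>carrier G. \<not> (r1 g \<in> W \<and> r2 g \<in> V))"
  proof
    fix z assume z: "z \<in> C - Op"
    then have "z \<in> carrier H2" using compactin_subset_topspace[OF N(3)] ts2 by auto
    moreover have "\<not> Rel x z" using z assms(3) by auto
    ultimately show "\<exists>W V. openin T1 W \<and> openin T2 V \<and> x \<in> W \<and> z \<in> V \<and> (\<forall>g\<in>carrier G. \<not> (r1 g \<in> W \<and> r2 g \<in> V))"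
      using Rel_notE[OF assms(1)] by simp
  qed
  then have "\<exists>Wf. \<forall>z\<in>C - Op. \<exists>V. openin T1 (Wf z) \<and> openin T2 V \<and> x \<in> Wf z \<and> z \<in> V \<and> (\<forall>g\<in>carrier G. \<not> (r1 g \<in> Wf z \<and> r2 g \<in> V))"
    by (rule bchoice)
  then obtain Wf where "\<forall>z\<in>C - Op. \<exists>V. openin T1 (Wf z) \<and> openin T2 V \<and> x \<in> Wf z \<and> z \<in> V \<and> (\<forall>g\<in>carrier G. \<not> (r1 g \<in> Wf z \<and> r2 g \<in> V))"
    by (rule exE)
  then have "\<exists>Vf. \<forall>z\<in>C - Op. openin T1 (Wf z) \<and> openin T2 (Vf z) \<and> x \<in> Wf z \<and> z \<in> Vf z \<and> (\<forall>g\<in>carrier G. \<not> (r1 g \<in> Wf z \<and> r2 g \<in> Vf z))"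
    by (rule bchoice)
  then obtain Vf where WV: "\<forall>z\<in>C - Op. openin T1 (Wf z) \<and> openin T2 (Vf z) \<and> x \<in> Wf z \<and> z \<in> Vf z \<and> (\<forall>g\<in>carrier G. \<not> (r1 g \<in> Wf z \<and> r2 g \<in> Vf z))"
    by (rule exE)
  have cov1: "\<forall>V\<in>Vf ` (C - Op). openin T2 V" using WV by simp
  have cov2: "C - Op \<subseteq> \<Union>(Vf ` (C - Op))" using WV by blast
  have "\<forall>\<U>. (\<forall>V\<in>\<U>. openin T2 V) \<and> C - Op \<subseteq> \<Union>\<U> \<longrightarrow> (\<exists>F. finite F \<and> F \<subseteq> \<U> \<and> C - Op \<subseteq> \<Union>F)"
    using CO unfolding compactin_def by (rule conjunct2)
  then have "\<exists>F. finite F \<and> F \<subseteq> Vf ` (C - Op) \<and> C - Op \<subseteq> \<Union>F"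
    using cov1 cov2 by (elim allE[of _ "Vf ` (C - Op)"]) simp
  then obtain F' where F': "finite F'" "F' \<subseteq> Vf ` (C - Op)" "C - Op \<subseteq> \<Union>F'"
    by (elim exE conjE)
  obtain F where F0: "F \<subseteq> C - Op" "finite F" "F' = Vf ` F"
    using finite_subset_image[OF F'(1,2)] by blast
  have F: "finite F" "F \<subseteq> C - Op" "C - Op \<subseteq> \<Union>(Vf ` F)" using F0 F'(3) by auto
  define W where "W = N \<inter> \<Inter>(Wf ` F)"
  have "openin T1 W" unfolding W_def using F WV N by (intro openin_Int_Inter) auto
  moreover have "x \<in> W" using WV F N by (auto simp: W_def)
  moreover have "\<forall>x'\<in>W. \<forall>y. Rel x' y \<longrightarrow> y \<in> Op"
  proof (intro ballI allI impI)
    fix x' y assume x': "x' \<in> W" "Rel x' y"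
    have "y \<in> C" using N(4) x' by (auto simp: W_def)
    show "y \<in> Op"
    proof (rule ccontr)
      assume "y \<notin> Op"
      then obtain z where z: "z \<in> F" "y \<in> Vf z" using F \<open>y \<in> C\<close> by blast
      then have zz: "z \<in> C - Op" using F by blast
      have "x' \<in> Wf z" using x' z by (auto simp: W_def)
      then obtain g where "g \<in> carrier G" "r1 g \<in> Wf z" "r2 g \<in> Vf z"
        using RelD[OF x'(2)] z WV zz by blast
      then show False using WV zz by blast
    qed
  qed
  ultimately show ?thesis by blast
qed

lemma Rel_ex:
  assumes x: "x \<in> carrier H1" shows "\<exists>y. Rel x y"
proof (rule ccontr)
  assume "\<nexists>y. Rel x y"
  then obtain W where W: "openin T1 W" "x \<in> W" "\<forall>x'\<in>W. \<forall>y. Rel x' y \<longrightarrow> y \<in> {}"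
    using Rel_usc[of x "{}"] x by auto
  have "x \<in> T1 closure_of (r1 ` carrier G)" using dense1 ts1 x by simp
  then have "\<exists>z. z \<in> r1 ` carrier G \<and> z \<in> W" using W(1,2) unfolding in_closure_of by simp
  then obtain g where "g \<in> carrier G" "r1 g \<in> W" by blast
  then show False using W(3) Rel_r by blast
qed

lemma Rel_mult:
  assumes a: "Rel x y" "Rel x' y'"
  shows "Rel (x \<otimes>\<^bsub>H1\<^esub> x') (y \<otimes>\<^bsub>H2\<^esub> y')"
proof -
  have c: "x \<in> carrier H1" "x' \<in> carrier H1" "y \<in> carrier H2" "y' \<in> carrier H2" using a Rel_carr by auto
  show ?thesis unfolding Rel_def
  proof (intro conjI allI impI)
    show "x \<otimes>\<^bsub>H1\<^esub> x' \<in> carrier H1" using c by simp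
    show "y \<otimes>\<^bsub>H2\<^esub> y' \<in> carrier H2" using c by simp
    fix U V assume U: "openin T1 U" and V: "openin T2 V" and xU: "x \<otimes>\<^bsub>H1\<^esub> x' \<in> U" and yV: "y \<otimes>\<^bsub>H2\<^esub> y' \<in> V"
    obtain U1 U2 where UU: "openin T1 U1" "openin T1 U2" "x \<in> U1" "x' \<in> U2" "\<forall>c\<in>U1. \<forall>d\<in>U2. c \<otimes>\<^bsub>H1\<^esub> d \<in> U"
      using tg_mult_nbhd[OF tg1 c(1,2) U xU] by blast
    obtain V1 V2 where VV: "openin T2 V1" "openin T2 V2" "y \<in> V1" "y' \<in> V2" "\<forall>c\<in>V1. \<forall>d\<in>V2. c \<otimes>\<^bsub>H2\<^esub> d \<in> V"
      using tg_mult_nbhd[OF tg2 c(3,4) V yV] by blast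
    obtain g1 where g1: "g1 \<in> carrier G" "r1 g1 \<in> U1" "r2 g1 \<in> V1" using RelD[OF a(1) UU(1) VV(1) UU(3) VV(3)] by blast
    obtain g2 where g2: "g2 \<in> carrier G" "r1 g2 \<in> U2" "r2 g2 \<in> V2" using RelD[OF a(2) UU(2) VV(2) UU(4) VV(4)] by blast
    have "g1 \<otimes>\<^bsub>G\<^esub> g2 \<in> carrier G" using g1 g2 by simp
    moreover have "r1 (g1 \<otimes>\<^bsub>G\<^esub> g2) \<in> U" using hom_mult[OF hom1 g1(1) g2(1)] UU g1 g2 by simp
    moreover have "r2 (g1 \<otimes>\<^bsub>G\<^esub> g2) \<in> V" using hom_mult[OF hom2 g1(1) g2(1)] VV g1 g2 by simp
    ultimately show "\<exists>g\<in>carrier G. r1 g \<in> U \<and> r2 g \<in> V" by blast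
  qed
qed

lemma Rel_inv:
  assumes a: "Rel x y"
  shows "Rel (inv\<^bsub>H1\<^esub> x) (inv\<^bsub>H2\<^esub> y)"
proof -
  have c: "x \<in> carrier H1" "y \<in> carrier H2" using a Rel_carr by auto
  show ?thesis unfolding Rel_def
  proof (intro conjI allI impI)
    show "inv\<^bsub>H1\<^esub> x \<in> carrier H1" using c by simp
    show "inv\<^bsub>H2\<^esub> y \<in> carrier H2" using c by simp
    fix U V assume U: "openin T1 U" and V: "openin T2 V" and xU: "inv\<^bsub>H1\<^esub> x \<in> U" and yV: "inv\<^bsub>H2\<^esub> y \<in> V"
    obtain U1 where UU: "openin T1 U1" "x \<in> U1" "\<forall>c\<in>U1. inv\<^bsub>H1\<^esub> c \<in> U"
      using tg_inv_nbhd[OF tg1 c(1) U xU] by blast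
    obtain V1 where VV: "openin T2 V1" "y \<in> V1" "\<forall>c\<in>V1. inv\<^bsub>H2\<^esub> c \<in> V"
      using tg_inv_nbhd[OF tg2 c(2) V yV] by blast
    obtain g where g: "g \<in> carrier G" "r1 g \<in> U1" "r2 g \<in> V1" using RelD[OF a UU(1) VV(1) UU(2) VV(2)] by blast
    have "inv\<^bsub>G\<^esub> g \<in> carrier G" using g by simp
    moreover have "r1 (inv\<^bsub>G\<^esub> g) \<in> U" using group_hom.hom_inv[OF gh1 g(1)] UU g by simp
    moreover have "r2 (inv\<^bsub>G\<^esub> g) \<in> V" using group_hom.hom_inv[OF gh2 g(1)] VV g by simp
    ultimately show "\<exists>g\<in>carrier G. r1 g \<in> U \<and> r2 g \<in> V" by blast
  qed
qed

lemma Rel_one: "Rel \<one>\<^bsub>H1\<^esub> \<one>\<^bsub>H2\<^esub>"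
  using Rel_r[of "\<one>\<^bsub>G\<^esub>"] group_hom.hom_one[OF gh1] group_hom.hom_one[OF gh2] by simp

lemma Rel_closed: "closedin T2 {y. Rel x y}"
  unfolding closedin_def
proof
  show "{y. Rel x y} \<subseteq> topspace T2" using ts2 Rel_carr by auto
  show "openin T2 (topspace T2 - {y. Rel x y})"
  proof (subst openin_subopen, intro ballI)
    fix y assume y: "y \<in> topspace T2 - {y. Rel x y}"
    show "\<exists>T. openin T2 T \<and> y \<in> T \<and> T \<subseteq> topspace T2 - {y. Rel x y}"
    proof (cases "x \<in> carrier H1")
      case True
      then obtain U V where UV: "openin T1 U" "openin T2 V" "x \<in> U" "y \<in> V" "\<forall>g\<in>carrier G. \<not> (r1 g \<in> U \<and> r2 g \<in> V)"
        using Rel_notE[OF True, of y] y ts2 by auto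
      have "V \<subseteq> topspace T2 - {y. Rel x y}"
      proof
        fix y' assume y': "y' \<in> V"
        have "\<not> Rel x y'"
        proof
          assume "Rel x y'"
          then show False using RelD[OF _ UV(1,2,3) y'] UV(5) by blast
        qed
        then show "y' \<in> topspace T2 - {y. Rel x y}" using openin_subset[OF UV(2)] y' by blast
      qed
      then show ?thesis using UV by blast
    next
      case False
      then show ?thesis using y Rel_carr by (intro exI[of _ "topspace T2"]) auto
    qed
  qed
qed

lemma Rel_compact: assumes "x \<in> carrier H1" shows "compactin T2 {y. Rel x y}"
proof -
  obtain N C where N: "openin T1 N" "x \<in> N" "compactin T2 C" "\<forall>x'\<in>N. \<forall>y. Rel x' y \<longrightarrow> y \<in> C"
    using Rel_nbhd[OF assms] by blast
  have "{y. Rel x y} \<subseteq> C" using N(2,4) by blast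
  then show ?thesis using closed_compactin[OF N(3) _ Rel_closed] by blast
qed

definition K1 where "K1 = {x. Rel x \<one>\<^bsub>H2\<^esub>}"
definition K2 where "K2 = {y. Rel \<one>\<^bsub>H1\<^esub> y}"
definition lam where "lam C = {y. \<exists>x\<in>C. Rel x y}"

lemma K2_compact: "compactin T2 K2"
  unfolding K2_def using Rel_compact by simp

lemma K1_subset: "K1 \<subseteq> carrier H1" using Rel_carr by (auto simp: K1_def)
lemma K2_subset: "K2 \<subseteq> carrier H2" using Rel_carr by (auto simp: K2_def)

lemma K1_sub: "subgroup K1 H1"
proof (rule H1.subgroupI)
  show "K1 \<subseteq> carrier H1" by (rule K1_subset)
  show "K1 \<noteq> {}" using Rel_one by (auto simp: K1_def)
  fix a b assume a: "a \<in> K1"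
  show "inv\<^bsub>H1\<^esub> a \<in> K1" using Rel_inv[of a "\<one>\<^bsub>H2\<^esub>"] a by (simp add: K1_def)
  assume b: "b \<in> K1"
  show "a \<otimes>\<^bsub>H1\<^esub> b \<in> K1" using Rel_mult[of a "\<one>\<^bsub>H2\<^esub>" b "\<one>\<^bsub>H2\<^esub>"] a b by (simp add: K1_def)
qed

lemma K2_sub: "subgroup K2 H2"
proof (rule H2.subgroupI)
  show "K2 \<subseteq> carrier H2" by (rule K2_subset)
  show "K2 \<noteq> {}" using Rel_one by (auto simp: K2_def)
  fix a b assume a: "a \<in> K2"
  show "inv\<^bsub>H2\<^esub> a \<in> K2" using Rel_inv[of "\<one>\<^bsub>H1\<^esub>" a] a by (simp add: K2_def)
  assume b: "b \<in> K2"
  show "a \<otimes>\<^bsub>H2\<^esub> b \<in> K2" using Rel_mult[of "\<one>\<^bsub>H1\<^esub>" a "\<one>\<^bsub>H1\<^esub>" b] a b by (simp add: K2_def)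
qed

lemma K1_normal: "K1 \<lhd> H1"
  unfolding H1.normal_inv_iff
proof (intro conjI K1_sub ballI)
  fix x k assume x: "x \<in> carrier H1" and k: "k \<in> K1"
  obtain y where y: "Rel x y" using Rel_ex[OF x] by blast
  have yc: "y \<in> carrier H2" using Rel_carr[OF y] by simp
  have "Rel (x \<otimes>\<^bsub>H1\<^esub> k \<otimes>\<^bsub>H1\<^esub> inv\<^bsub>H1\<^esub> x) (y \<otimes>\<^bsub>H2\<^esub> \<one>\<^bsub>H2\<^esub> \<otimes>\<^bsub>H2\<^esub> inv\<^bsub>H2\<^esub> y)"
    using k by (intro Rel_mult Rel_inv y) (simp add: K1_def)
  then show "x \<otimes>\<^bsub>H1\<^esub> k \<otimes>\<^bsub>H1\<^esub> inv\<^bsub>H1\<^esub> x \<in> K1" using yc by (simp add: K1_def)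
qed

lemma lam_coset:
  assumes r: "Rel x0 y0"
  shows "lam (K1 #>\<^bsub>H1\<^esub> x0) = K2 #>\<^bsub>H2\<^esub> y0"
proof
  have x0c: "x0 \<in> carrier H1" and y0c: "y0 \<in> carrier H2" using Rel_carr[OF r] by auto
  show "lam (K1 #>\<^bsub>H1\<^esub> x0) \<subseteq> K2 #>\<^bsub>H2\<^esub> y0"
  proof
    fix y assume "y \<in> lam (K1 #>\<^bsub>H1\<^esub> x0)"
    then obtain x where x: "x \<in> K1 #>\<^bsub>H1\<^esub> x0" "Rel x y" by (auto simp: lam_def)
    then obtain k where k: "k \<in> K1" "x = k \<otimes>\<^bsub>H1\<^esub> x0" unfolding r_coset_def by blast
    have "Rel (k \<otimes>\<^bsub>H1\<^esub> x0) (\<one>\<^bsub>H2\<^esub> \<otimes>\<^bsub>H2\<^esub> y0)"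
      using k(1) by (intro Rel_mult r) (simp add: K1_def)
    then have r1: "Rel x y0" using k(2) y0c by simp
    have xc: "x \<in> carrier H1" and yc: "y \<in> carrier H2" using Rel_carr[OF x(2)] by auto
    have "Rel (x \<otimes>\<^bsub>H1\<^esub> inv\<^bsub>H1\<^esub> x) (y \<otimes>\<^bsub>H2\<^esub> inv\<^bsub>H2\<^esub> y0)"
      by (rule Rel_mult[OF x(2) Rel_inv[OF r1]])
    then have "y \<otimes>\<^bsub>H2\<^esub> inv\<^bsub>H2\<^esub> y0 \<in> K2" using xc by (simp add: K2_def)
    moreover have "y = (y \<otimes>\<^bsub>H2\<^esub> inv\<^bsub>H2\<^esub> y0) \<otimes>\<^bsub>H2\<^esub> y0"
      using yc y0c by (simp add: H2.m_assoc)
    ultimately show "y \<in> K2 #>\<^bsub>H2\<^esub> y0" unfolding r_coset_def by blast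
  qed
  show "K2 #>\<^bsub>H2\<^esub> y0 \<subseteq> lam (K1 #>\<^bsub>H1\<^esub> x0)"
  proof
    fix y assume "y \<in> K2 #>\<^bsub>H2\<^esub> y0"
    then obtain k where k: "k \<in> K2" "y = k \<otimes>\<^bsub>H2\<^esub> y0" unfolding r_coset_def by blast
    have "Rel (\<one>\<^bsub>H1\<^esub> \<otimes>\<^bsub>H1\<^esub> x0) (k \<otimes>\<^bsub>H2\<^esub> y0)"
      using k(1) by (intro Rel_mult r) (simp add: K2_def)
    then have "Rel x0 y" using k(2) x0c by simp
    moreover have "x0 \<in> K1 #>\<^bsub>H1\<^esub> x0" by (rule H1.rcos_self[OF x0c K1_sub])
    ultimately show "y \<in> lam (K1 #>\<^bsub>H1\<^esub> x0)" by (auto simp: lam_def)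
  qed
qed

lemma coset1E:
  assumes "C \<in> carrier (H1 Mod K1)"
  obtains x0 y0 where "x0 \<in> carrier H1" "C = K1 #>\<^bsub>H1\<^esub> x0" "Rel x0 y0" "lam C = K2 #>\<^bsub>H2\<^esub> y0"
proof -
  obtain x0 where x0: "x0 \<in> carrier H1" "C = K1 #>\<^bsub>H1\<^esub> x0" using assms by (auto simp: FactGroup_def RCOSETS_def)
  obtain y0 where "Rel x0 y0" using Rel_ex[OF x0(1)] by blast
  then show ?thesis using that x0 lam_coset by blast
qed

lemma lam_carrier: "C \<in> carrier (H1 Mod K1) \<Longrightarrow> lam C \<in> carrier (H2 Mod K2)"
proof -
  assume "C \<in> carrier (H1 Mod K1)"
  then obtain x0 y0 where "Rel x0 y0" "lam C = K2 #>\<^bsub>H2\<^esub> y0" by (rule coset1E)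
  then show ?thesis using H2.rcosetsI[OF K2_subset Rel_carr(2)] by (simp add: FactGroup_def)
qed

lemma lam_cont:
  "continuous_map (quotient_group_topology H1 T1 K1) (quotient_group_topology H2 T2 K2) lam"
proof -
  note Q1o = qtop_open[OF grp1 K1_sub ts1] and Q1s = qtop_space[OF grp1 K1_sub ts1]
  note Q2o = qtop_open[OF grp2 K2_sub ts2] and Q2s = qtop_space[OF grp2 K2_sub ts2]
  have A: "lam \<in> carrier (H1 Mod K1) \<rightarrow> carrier (H2 Mod K2)" using lam_carrier by blast
  have B: "openin T1 (\<Union>{C \<in> carrier (H1 Mod K1). lam C \<in> \<V>})"
    if V1: "\<V> \<subseteq> carrier (H2 Mod K2)" and V2: "openin T2 (\<Union>\<V>)" for \<V>
  proof (subst openin_subopen, intro ballI)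
    fix x assume "x \<in> \<Union>{C \<in> carrier (H1 Mod K1). lam C \<in> \<V>}"
    then obtain C where C: "C \<in> carrier (H1 Mod K1)" "lam C \<in> \<V>" "x \<in> C" by blast
    then obtain x0 where x0: "x0 \<in> carrier H1" "C = K1 #>\<^bsub>H1\<^esub> x0" by (auto simp: FactGroup_def RCOSETS_def)
    have xc: "x \<in> carrier H1" using subgroup.elemrcos_carrier[OF K1_sub grp1 x0(1)] C x0 by blast
    have Cx: "C = K1 #>\<^bsub>H1\<^esub> x" using H1.repr_independence[of x K1 x0] x0 C K1_sub by simp
    have all: "\<forall>y'. Rel x y' \<longrightarrow> y' \<in> \<Union>\<V>"
    proof (intro allI impI)
      fix y' assume "Rel x y'"
      then have "y' \<in> lam C" using C(3) by (auto simp: lam_def)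
      then show "y' \<in> \<Union>\<V>" using C(2) by blast
    qed
    obtain W where W: "openin T1 W" "x \<in> W" "\<forall>x'\<in>W. \<forall>y'. Rel x' y' \<longrightarrow> y' \<in> \<Union>\<V>"
      using Rel_usc[OF xc V2 all] by blast
    have "W \<subseteq> \<Union>{C \<in> carrier (H1 Mod K1). lam C \<in> \<V>}"
    proof
      fix x' assume x': "x' \<in> W"
      then have x'c: "x' \<in> carrier H1" using openin_subset[OF W(1)] ts1 by blast
      obtain y' where y': "Rel x' y'" using Rel_ex[OF x'c] by blast
      then have "y' \<in> \<Union>\<V>" using W(3) x' by blast
      then obtain D where D: "D \<in> \<V>" "y' \<in> D" by blast
      have "D \<in> rcosets\<^bsub>H2\<^esub> K2" using D V1 by (auto simp: FactGroup_def)
      then obtain y2 where y2: "y2 \<in> carrier H2" "D = K2 #>\<^bsub>H2\<^esub> y2" by (auto simp: RCOSETS_def)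
      have "D = K2 #>\<^bsub>H2\<^esub> y'" using H2.repr_independence[of y' K2 y2] y2 D K2_sub by simp
      then have "lam (K1 #>\<^bsub>H1\<^esub> x') \<in> \<V>" using lam_coset[OF y'] D by simp
      moreover have "K1 #>\<^bsub>H1\<^esub> x' \<in> carrier (H1 Mod K1)" using H1.rcosetsI[OF K1_subset x'c] by (simp add: FactGroup_def)
      moreover have "x' \<in> K1 #>\<^bsub>H1\<^esub> x'" by (rule H1.rcos_self[OF x'c K1_sub])
      ultimately show "x' \<in> \<Union>{C \<in> carrier (H1 Mod K1). lam C \<in> \<V>}" by blast
    qed
    then show "\<exists>T. openin T1 T \<and> x \<in> T \<and> T \<subseteq> \<Union>{C \<in> carrier (H1 Mod K1). lam C \<in> \<V>}" using W by blast
  qed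
  show ?thesis unfolding continuous_map_def Q1s Q2s Q1o Q2o
  proof (rule conjI[OF A], intro allI impI conjI)
    fix \<V> assume V: "\<V> \<subseteq> carrier (H2 Mod K2) \<and> openin T2 (\<Union> \<V>)"
    show "{C \<in> carrier (H1 Mod K1). lam C \<in> \<V>} \<subseteq> carrier (H1 Mod K1)" by (rule Collect_restrict)
    show "openin T1 (\<Union> {C \<in> carrier (H1 Mod K1). lam C \<in> \<V>})" using V B by (elim conjE) 
  qed
qed

end




locale twocomp2 = twocomp

sublocale twocomp2 \<subseteq> sw: twocomp G H2 T2 r2 H1 T1 r1
  unfolding twocomp_def using grpG hom1 hom2 tg1 tg2 haus1 haus2 lc1 lc2 dense1 dense2 by (simp add: rc)

context twocomp2
begin

lemma Rel_sw: "sw.Rel y x = Rel x y"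
proof
  assume a: "sw.Rel y x"
  show "Rel x y" unfolding Rel_def
  proof (intro conjI allI impI)
    show "x \<in> carrier H1" "y \<in> carrier H2" using sw.Rel_carr[OF a] by simp_all
    fix U V assume "openin T1 U" "openin T2 V" "x \<in> U" "y \<in> V"
    then obtain g where "g \<in> carrier G" "r2 g \<in> V" "r1 g \<in> U" using sw.RelD[OF a] by blast
    then show "\<exists>g\<in>carrier G. r1 g \<in> U \<and> r2 g \<in> V" by blast
  qed
next
  assume a: "Rel x y"
  show "sw.Rel y x" unfolding sw.Rel_def
  proof (intro conjI allI impI)
    show "x \<in> carrier H1" "y \<in> carrier H2" using Rel_carr[OF a] by simp_all
    fix U V assume "openin T2 U" "openin T1 V" "y \<in> U" "x \<in> V"
    then obtain g where "g \<in> carrier G" "r1 g \<in> V" "r2 g \<in> U" using RelD[OF a] by blast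
    then show "\<exists>g\<in>carrier G. r2 g \<in> U \<and> r1 g \<in> V" by blast
  qed
qed

lemma K1_sw: "sw.K1 = K2" by (simp add: sw.K1_def K2_def Rel_sw)
lemma K2_sw: "sw.K2 = K1" by (simp add: sw.K2_def K1_def Rel_sw)

lemma K2_normal: "K2 \<lhd> H2" using sw.K1_normal by (simp add: K1_sw)
lemma K1_compact: "compactin T1 K1" using sw.K2_compact by (simp add: K2_sw)

lemma lam_back: "Rel x0 y0 \<Longrightarrow> sw.lam (K2 #>\<^bsub>H2\<^esub> y0) = K1 #>\<^bsub>H1\<^esub> x0"
  using sw.lam_coset[of y0 x0] by (simp add: Rel_sw K1_sw K2_sw)

lemma lam_hom: "lam \<in> hom (H1 Mod K1) (H2 Mod K2)"
proof (rule homI)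
  fix C assume "C \<in> carrier (H1 Mod K1)"
  then show "lam C \<in> carrier (H2 Mod K2)" by (rule lam_carrier)
next
  fix C D assume C: "C \<in> carrier (H1 Mod K1)" and D: "D \<in> carrier (H1 Mod K1)"
  obtain x0 y0 where a: "x0 \<in> carrier H1" "C = K1 #>\<^bsub>H1\<^esub> x0" "Rel x0 y0" "lam C = K2 #>\<^bsub>H2\<^esub> y0"
    using C by (rule coset1E)
  obtain x1 y1 where b: "x1 \<in> carrier H1" "D = K1 #>\<^bsub>H1\<^esub> x1" "Rel x1 y1" "lam D = K2 #>\<^bsub>H2\<^esub> y1"
    using D by (rule coset1E)
  have y: "y0 \<in> carrier H2" "y1 \<in> carrier H2" using a(3) b(3) Rel_carr by auto
  have "C \<otimes>\<^bsub>H1 Mod K1\<^esub> D = K1 #>\<^bsub>H1\<^esub> (x0 \<otimes>\<^bsub>H1\<^esub> x1)"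
    using normal.rcos_sum[OF K1_normal a(1) b(1)] a(2) b(2) by (simp add: FactGroup_def)
  then have "lam (C \<otimes>\<^bsub>H1 Mod K1\<^esub> D) = K2 #>\<^bsub>H2\<^esub> (y0 \<otimes>\<^bsub>H2\<^esub> y1)"
    using lam_coset[OF Rel_mult[OF a(3) b(3)]] by simp
  also have "\<dots> = (K2 #>\<^bsub>H2\<^esub> y0) <#>\<^bsub>H2\<^esub> (K2 #>\<^bsub>H2\<^esub> y1)"
    using normal.rcos_sum[OF K2_normal y] by simp
  also have "\<dots> = lam C \<otimes>\<^bsub>H2 Mod K2\<^esub> lam D" using a(4) b(4) by (simp add: FactGroup_def)
  finally show "lam (C \<otimes>\<^bsub>H1 Mod K1\<^esub> D) = lam C \<otimes>\<^bsub>H2 Mod K2\<^esub> lam D" .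
qed

lemma inv1: "C \<in> carrier (H1 Mod K1) \<Longrightarrow> sw.lam (lam C) = C"
proof -
  assume "C \<in> carrier (H1 Mod K1)"
  then obtain x0 y0 where a: "x0 \<in> carrier H1" "C = K1 #>\<^bsub>H1\<^esub> x0" "Rel x0 y0" "lam C = K2 #>\<^bsub>H2\<^esub> y0"
    by (rule coset1E)
  then show ?thesis using lam_back[OF a(3)] by simp
qed

lemma inv2: "D \<in> carrier (H2 Mod K2) \<Longrightarrow> lam (sw.lam D) = D"
proof -
  assume "D \<in> carrier (H2 Mod K2)"
  then have "D \<in> carrier (H2 Mod sw.K1)" by (simp add: K1_sw)
  then obtain y0 x0 where a: "y0 \<in> carrier H2" "D = sw.K1 #>\<^bsub>H2\<^esub> y0" "sw.Rel y0 x0" "sw.lam D = sw.K2 #>\<^bsub>H1\<^esub> x0"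
    by (rule sw.coset1E)
  have r: "Rel x0 y0" using a(3) by (simp add: Rel_sw)
  show ?thesis using a lam_coset[OF r] by (simp add: K1_sw K2_sw)
qed

lemma lam_bij: "bij_betw lam (carrier (H1 Mod K1)) (carrier (H2 Mod K2))"
proof (rule bij_betw_byWitness[where f' = sw.lam])
  show "\<forall>a\<in>carrier (H1 Mod K1). sw.lam (lam a) = a" using inv1 by blast
  show "\<forall>a'\<in>carrier (H2 Mod K2). lam (sw.lam a') = a'" using inv2 by blast
  show "lam ` carrier (H1 Mod K1) \<subseteq> carrier (H2 Mod K2)" using lam_carrier by blast
  show "sw.lam ` carrier (H2 Mod K2) \<subseteq> carrier (H1 Mod K1)"
    using sw.lam_carrier by (auto simp: K1_sw K2_sw)
qed

lemma lam_homeo: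
  "homeomorphic_map (quotient_group_topology H1 T1 K1) (quotient_group_topology H2 T2 K2) lam"
  unfolding homeomorphic_map_maps
proof (rule exI[of _ sw.lam], unfold homeomorphic_maps_def, intro conjI)
  show "continuous_map (quotient_group_topology H1 T1 K1) (quotient_group_topology H2 T2 K2) lam"
    by (rule lam_cont)
  show "continuous_map (quotient_group_topology H2 T2 K2) (quotient_group_topology H1 T1 K1) sw.lam"
    using sw.lam_cont by (simp add: K1_sw K2_sw)
  show "\<forall>x\<in>topspace (quotient_group_topology H1 T1 K1). sw.lam (lam x) = x"
    using inv1 qtop_space[OF grp1 K1_sub ts1] by simp
  show "\<forall>y\<in>topspace (quotient_group_topology H2 T2 K2). lam (sw.lam y) = y"
    using inv2 qtop_space[OF grp2 K2_sub ts2] by simp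
qed

lemma main:
  "\<exists>K1 K2 lam.
           K1 \<lhd> H1 \<and> compactin T1 K1 \<and> K2 \<lhd> H2 \<and> compactin T2 K2 \<and>
           lam \<in> iso (H1 Mod K1) (H2 Mod K2) \<and>
           homeomorphic_map (quotient_group_topology H1 T1 K1) (quotient_group_topology H2 T2 K2) lam \<and>
           (\<forall>g\<in>carrier G. lam (K1 #>\<^bsub>H1\<^esub> r1 g) = K2 #>\<^bsub>H2\<^esub> r2 g)"
proof (intro exI conjI)
  show "K1 \<lhd> H1" by (rule K1_normal)
  show "compactin T1 K1" by (rule K1_compact)
  show "K2 \<lhd> H2" by (rule K2_normal)
  show "compactin T2 K2" by (rule K2_compact)
  show "lam \<in> iso (H1 Mod K1) (H2 Mod K2)" using lam_hom lam_bij by (simp add: iso_def)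
  show "homeomorphic_map (quotient_group_topology H1 T1 K1) (quotient_group_topology H2 T2 K2) lam"
    by (rule lam_homeo)
  show "\<forall>g\<in>carrier G. lam (K1 #>\<^bsub>H1\<^esub> r1 g) = K2 #>\<^bsub>H2\<^esub> r2 g"
    using lam_coset[OF Rel_r] by blast
qed

end

theorem theoremC:
  fixes G :: "'g monoid" and X :: "'x::metric_space set" and act :: "'g \<Rightarrow> 'x \<Rightarrow> 'x"
    and H1 :: "'h1 monoid" and T1 :: "'h1 topology" and \<rho>1 :: "'g \<Rightarrow> 'h1"
    and H2 :: "'h2 monoid" and T2 :: "'h2 topology" and \<rho>2 :: "'g \<Rightarrow> 'h2"
  assumes "group G"
    and "quasi_geodesic X"
    and "quasi_action G X act"
    and "cobounded_action G X act"
    and "topological_completion G X act H1 T1 \<rho>1"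
    and "topological_completion G X act H2 T2 \<rho>2"
  shows "\<exists>K1 K2 lam.
           K1 \<lhd> H1 \<and> compactin T1 K1 \<and> K2 \<lhd> H2 \<and> compactin T2 K2 \<and>
           lam \<in> iso (H1 Mod K1) (H2 Mod K2) \<and>
           homeomorphic_map (quotient_group_topology H1 T1 K1) (quotient_group_topology H2 T2 K2) lam \<and>
           (\<forall>g\<in>carrier G. lam (K1 #>\<^bsub>H1\<^esub> \<rho>1 g) = K2 #>\<^bsub>H2\<^esub> \<rho>2 g)"
proof -
  have c1: "\<rho>1 \<in> hom G H1" "topological_group H1 T1" "Hausdorff_space T1" "locally_compact_space T1"
     "T1 closure_of (\<rho>1 ` carrier G) = topspace T1"
     "\<And>S. S \<subseteq> carrier G \<Longrightarrow> bounded_subset G X act S \<longleftrightarrow> compactin T1 (T1 closure_of (\<rho>1 ` S))"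
    using assms(5) unfolding topological_completion_def by auto
  have c2: "\<rho>2 \<in> hom G H2" "topological_group H2 T2" "Hausdorff_space T2" "locally_compact_space T2"
     "T2 closure_of (\<rho>2 ` carrier G) = topspace T2"
     "\<And>S. S \<subseteq> carrier G \<Longrightarrow> bounded_subset G X act S \<longleftrightarrow> compactin T2 (T2 closure_of (\<rho>2 ` S))"
    using assms(6) unfolding topological_completion_def by auto
  have tw: "twocomp G H1 T1 \<rho>1 H2 T2 \<rho>2"
    unfolding twocomp_def using assms(1) c1(1-5) c2(1-5) by (simp add: c1(6)[symmetric] c2(6)[symmetric])
  interpret tc: twocomp2 G H1 T1 \<rho>1 H2 T2 \<rho>2 unfolding twocomp2_def by (rule tw)
  show ?thesis by (rule tc.main)
qed


end
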